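(* Let $G$ be a finite simple $(P_2\cup P_1)$-free graph. Then: (1) if $S\subseteq V(G)$ is a cutset of $G$, then every component of $G-S$ consists of a single vertex; (2) if $S$ is a minimal cutset of $G$ (no proper subset of $S$ is a cutset), then every vertex of $S$ is adjacent to every vertex of $V(G)\setminus S$, i.e., the bipartite graph $G[S,V(G)\setminus S]$ is complete bipartite; (3) $\kappa(G)=\delta(G)$; (4) $\delta(G)\ge |V(G)|-\alpha(G)$.
   Context: $P_2\cup P_1$ is the graph on three vertices consisting of one edge and one isolated vertex; $G$ is $(P_2\cup P_1)$-free if it has no induced subgraph isomorphic to $P_2\cup P_1$. A cutset of $G$ is a set $S\subseteq V(G)$ such that $G-S$ has at least two components. $G[S,V(G)\setminus S]$ denotes the bipartite graph with parts $S$ and $V(G)\setminus S$ whose edges are the edges of $G$ between these parts. $\delta(G)$ is the minimum degree, $\alpha(G)$ the independence number, and $\kappa(G)$ the connectivity: the minimum size of a cutset if $G$ is noncomplete, and $|V(G)|-1$ if $G$ is complete. *)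

theory Defs
  imports Main
begin

definition simple_graph :: "'a set \<Rightarrow> ('a \<Rightarrow> 'a \<Rightarrow> bool) \<Rightarrow> bool" where
  "simple_graph V E \<longleftrightarrow> finite V \<and> (\<forall>x y. E x y \<longrightarrow> x \<in> V \<and> y \<in> V)
     \<and> (\<forall>x y. E x y \<longrightarrow> E y x) \<and> (\<forall>x. \<not> E x x)"

text \<open>G has no induced subgraph isomorphic to P2 \<union> P1 (an edge plus an isolated vertex).\<close>
definition P2P1_free :: "'a set \<Rightarrow> ('a \<Rightarrow> 'a \<Rightarrow> bool) \<Rightarrow> bool" where
  "P2P1_free V E \<longleftrightarrow> \<not> (\<exists>a\<in>V. \<exists>b\<in>V. \<exists>c\<in>V. a \<noteq> c \<and> b \<noteq> c \<and> E a b \<and> \<not> E a c \<and> \<not> E b c)"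

definition conn_in :: "'a set \<Rightarrow> ('a \<Rightarrow> 'a \<Rightarrow> bool) \<Rightarrow> 'a set \<Rightarrow> 'a \<Rightarrow> 'a \<Rightarrow> bool" where
  "conn_in V E S = (\<lambda>x y. E x y \<and> x \<in> V - S \<and> y \<in> V - S)\<^sup>*\<^sup>*"

definition component :: "'a set \<Rightarrow> ('a \<Rightarrow> 'a \<Rightarrow> bool) \<Rightarrow> 'a set \<Rightarrow> 'a \<Rightarrow> 'a set" where
  "component V E S x = {y \<in> V - S. conn_in V E S x y}"

definition components :: "'a set \<Rightarrow> ('a \<Rightarrow> 'a \<Rightarrow> bool) \<Rightarrow> 'a set \<Rightarrow> 'a set set" where
  "components V E S = component V E S ` (V - S)"

definition cutset :: "'a set \<Rightarrow> ('a \<Rightarrow> 'a \<Rightarrow> bool) \<Rightarrow> 'a set \<Rightarrow> bool" where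
  "cutset V E S \<longleftrightarrow> S \<subseteq> V \<and> card (components V E S) \<ge> 2"

definition minimal_cutset :: "'a set \<Rightarrow> ('a \<Rightarrow> 'a \<Rightarrow> bool) \<Rightarrow> 'a set \<Rightarrow> bool" where
  "minimal_cutset V E S \<longleftrightarrow> cutset V E S \<and> (\<forall>T. T \<subset> S \<longrightarrow> \<not> cutset V E T)"

definition degree :: "'a set \<Rightarrow> ('a \<Rightarrow> 'a \<Rightarrow> bool) \<Rightarrow> 'a \<Rightarrow> nat" where
  "degree V E v = card {u \<in> V. E v u}"

definition min_degree :: "'a set \<Rightarrow> ('a \<Rightarrow> 'a \<Rightarrow> bool) \<Rightarrow> nat" where
  "min_degree V E = Min (degree V E ` V)"

definition independent :: "'a set \<Rightarrow> ('a \<Rightarrow> 'a \<Rightarrow> bool) \<Rightarrow> 'a set \<Rightarrow> bool" where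
  "independent V E I \<longleftrightarrow> I \<subseteq> V \<and> (\<forall>x\<in>I. \<forall>y\<in>I. \<not> E x y)"

definition independence_number :: "'a set \<Rightarrow> ('a \<Rightarrow> 'a \<Rightarrow> bool) \<Rightarrow> nat" where
  "independence_number V E = Max {card I | I. independent V E I}"

definition complete_graph :: "'a set \<Rightarrow> ('a \<Rightarrow> 'a \<Rightarrow> bool) \<Rightarrow> bool" where
  "complete_graph V E \<longleftrightarrow> (\<forall>x\<in>V. \<forall>y\<in>V. x \<noteq> y \<longrightarrow> E x y)"

definition connectivity :: "'a set \<Rightarrow> ('a \<Rightarrow> 'a \<Rightarrow> bool) \<Rightarrow> nat" where
  "connectivity V E = (if complete_graph V E then card V - 1
                       else Min {card S | S. cutset V E S})"

end

theory Submission
  imports Defs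
begin

lemma iso_component:
  assumes "x \<in> V - S" "\<forall>z\<in>V - S. \<not> E x z"
  shows "component V E S x = {x}"
proof -
  have "conn_in V E S x y \<Longrightarrow> y = x" for y
    unfolding conn_in_def
    by (induction rule: rtranclp_induct) (use assms in auto)
  thus ?thesis using assms unfolding component_def conn_in_def by auto
qed

lemma card2:
  assumes "finite A" "a \<in> A" "b \<in> A" "a \<noteq> b"
  shows "card A \<ge> 2"
proof -
  have "card {a,b} \<le> card A" using assms by (intro card_mono) auto
  thus ?thesis using assms by auto
qed

lemma all_conn:
  assumes sg: "simple_graph V E" and fr: "P2P1_free V E"
    and x: "x \<in> V - S" and z: "z \<in> V - S" and ezx: "E x z"
  shows "components V E S = {V - S}"
proof -
  let ?R = "\<lambda>x y. E x y \<and> x \<in> V - S \<and> y \<in> V - S"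
  have sym: "E a b \<Longrightarrow> E b a" for a b using sg unfolding simple_graph_def by blast
  have xz: "x \<noteq> z" using sg ezx unfolding simple_graph_def by blast
  have near: "w = x \<or> w = z \<or> E x w \<or> E z w" if "w \<in> V - S" for w
  proof (rule ccontr)
    assume "\<not> ?thesis"
    hence "w \<noteq> x" "w \<noteq> z" "\<not> E x w" "\<not> E z w" by auto
    moreover have "x \<in> V" "z \<in> V" "w \<in> V" using x z that by auto
    ultimately show False using fr ezx unfolding P2P1_free_def by metis
  qed
  have to: "?R\<^sup>*\<^sup>* x w" if "w \<in> V - S" for w
  proof -
    have xz': "?R x z" using x z ezx by auto
    from near[OF that] show ?thesis
    proof (elim disjE)
      assume "w = x" thus ?thesis by simp
    next
      assume "w = z" thus ?thesis using xz' by (simp add: r_into_rtranclp)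
    next
      assume "E x w" hence "?R x w" using x that by simp
      thus ?thesis by (simp add: r_into_rtranclp)
    next
      assume "E z w" hence zw: "?R z w" using z that by simp
      have "?R\<^sup>*\<^sup>* x z" using xz' by (rule r_into_rtranclp)
      thus ?thesis using zw by (rule rtranclp.rtrancl_into_rtrancl)
    qed
  qed
  have from_: "?R\<^sup>*\<^sup>* w x" if "w \<in> V - S" for w
  proof -
    have zx': "?R z x" using x z ezx sym by auto
    from near[OF that] show ?thesis
    proof (elim disjE)
      assume "w = x" thus ?thesis by simp
    next
      assume "w = z" thus ?thesis using zx' by (simp add: r_into_rtranclp)
    next
      assume "E x w" hence "?R w x" using x that sym by simp
      thus ?thesis by (simp add: r_into_rtranclp)
    next
      assume "E z w" hence wz: "?R w z" using z that sym by simp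
      have "?R\<^sup>*\<^sup>* z x" using zx' by (rule r_into_rtranclp)
      with wz show ?thesis by (rule converse_rtranclp_into_rtranclp)
    qed
  qed
  have "component V E S a = V - S" if "a \<in> V - S" for a
  proof -
    have "?R\<^sup>*\<^sup>* a w" if "w \<in> V - S" for w
      using from_[OF \<open>a \<in> V - S\<close>] to[OF that] by (rule rtranclp_trans)
    thus ?thesis unfolding component_def conn_in_def by auto
  qed
  moreover have "V - S \<noteq> {}" using x by auto
  ultimately show ?thesis unfolding components_def by auto
qed

lemma cut_noedge:
  assumes sg: "simple_graph V E" and fr: "P2P1_free V E"
    and c: "cutset V E S" and x: "x \<in> V - S" and z: "z \<in> V - S"
  shows "\<not> E x z"
proof
  assume "E x z"
  then have "components V E S = {V - S}" using all_conn[OF sg fr x z] by simp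
  then show False using c unfolding cutset_def by simp
qed

lemma fin_comp: "simple_graph V E \<Longrightarrow> finite (components V E S)"
  unfolding components_def simple_graph_def by auto

theorem lemma2p6:
  fixes V :: "'a set" and E :: "'a \<Rightarrow> 'a \<Rightarrow> bool"
  assumes "simple_graph V E" and "V \<noteq> {}" and "P2P1_free V E"
  shows "(\<forall>S. cutset V E S \<longrightarrow> (\<forall>C\<in>components V E S. card C = 1))
       \<and> (\<forall>S. minimal_cutset V E S \<longrightarrow> (\<forall>s\<in>S. \<forall>v\<in>V - S. E s v))
       \<and> connectivity V E = min_degree V E
       \<and> min_degree V E \<ge> card V - independence_number V E"
proof -
  note sg = assms(1) and fr = assms(3)
  have finV: "finite V" using sg unfolding simple_graph_def by blast
  have inV: "E a b \<Longrightarrow> a \<in> V \<and> b \<in> V" for a b using sg unfolding simple_graph_def by blast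
  have sym: "E a b \<Longrightarrow> E b a" for a b using sg unfolding simple_graph_def by blast
  have irr: "\<not> E a a" for a using sg unfolding simple_graph_def by blast
  have P1: "\<forall>C\<in>components V E S. card C = 1" if c: "cutset V E S" for S
  proof
    fix C assume "C \<in> components V E S"
    then obtain x where x: "x \<in> V - S" and C: "C = component V E S x"
      unfolding components_def by auto
    have "C = {x}" unfolding C
      by (rule iso_component[OF x]) (use cut_noedge[OF sg fr c x] in blast)
    thus "card C = 1" by simp
  qed
  have P2: "\<forall>s\<in>S. \<forall>v\<in>V - S. E s v" if m: "minimal_cutset V E S" for S
  proof (intro ballI, rule ccontr)
    fix s v assume s: "s \<in> S" and v: "v \<in> V - S" and ne: "\<not> E s v"
    have c: "cutset V E S" using m unfolding minimal_cutset_def by blast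
    have SV: "S \<subseteq> V" using c unfolding cutset_def by blast
    obtain w where w: "w \<in> V - S" "w \<noteq> v"
    proof (rule ccontr)
      assume "\<not> thesis"
      with that have "V - S = {v}" using v by blast
      hence "components V E S = {component V E S v}" unfolding components_def by auto
      thus False using c unfolding cutset_def by simp
    qed
    let ?T = "S - {s}"
    have vT: "v \<in> V - ?T" using v by auto
    have "\<forall>z\<in>V - ?T. \<not> E v z"
    proof
      fix z assume z: "z \<in> V - ?T"
      show "\<not> E v z"
      proof (cases "z = s")
        case True thus ?thesis using ne sym by blast
      next
        case False thus ?thesis using z cut_noedge[OF sg fr c v] by blast
      qed
    qed
    hence cv: "component V E ?T v = {v}" by (rule iso_component[OF vT])
    have wT: "w \<in> V - ?T" using w by auto
    have "w \<in> component V E ?T w" using wT unfolding component_def conn_in_def by auto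
    hence "component V E ?T w \<noteq> component V E ?T v" using cv w by auto
    moreover have "component V E ?T w \<in> components V E ?T" "component V E ?T v \<in> components V E ?T"
      using wT vT unfolding components_def by auto
    ultimately have "card (components V E ?T) \<ge> 2"
      using card2[OF fin_comp[OF sg]] by metis
    hence "cutset V E ?T" using SV unfolding cutset_def by auto
    moreover have "?T \<subset> S" using s by auto
    ultimately show False using m unfolding minimal_cutset_def by blast
  qed
  define N where "N v = {u \<in> V. E v u}" for v
  have degN: "degree V E v = card (N v)" for v unfolding degree_def N_def by simp
  have NV: "N v \<subseteq> V" for v unfolding N_def by auto
  have finD: "finite (degree V E ` V)" using finV by simp
  have "min_degree V E \<in> degree V E ` V"
    using Min_in[OF finD] assms(2) unfolding min_degree_def by auto
  then obtain v where v: "v \<in> V" and vmin: "degree V E v = min_degree V E"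
    by (metis imageE)
  have mle: "min_degree V E \<le> degree V E x" if "x \<in> V" for x
    unfolding min_degree_def using finD that by auto
  have P3: "connectivity V E = min_degree V E"
  proof (cases "complete_graph V E")
    case True
    have "N x = V - {x}" if "x \<in> V" for x
      using True that irr unfolding N_def complete_graph_def by auto
    hence "degree V E x = card V - 1" if "x \<in> V" for x using that finV degN by simp
    hence "degree V E v = card V - 1" using v by simp
    then show ?thesis using True vmin unfolding connectivity_def by simp
  next
    case False
    then obtain x y where xy: "x \<in> V" "y \<in> V" "x \<noteq> y" "\<not> E x y"
      unfolding complete_graph_def by blast
    have "N x \<subseteq> V - {x, y}" using xy irr unfolding N_def by auto
    hence "card (N x) \<le> card (V - {x,y})" using finV by (intro card_mono) auto
    also have "\<dots> = card V - 2" using xy finV by simp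
    finally have "card (N v) \<le> card V - 2" using mle[OF xy(1)] vmin degN by simp
    have "\<exists>u \<in> V - N v. u \<noteq> v"
    proof (rule ccontr)
      assume "\<not> ?thesis"
      hence "V - N v \<subseteq> {v}" by auto
      hence "card (V - N v) \<le> card {v}" by (intro card_mono) auto
      hence "card (V - N v) \<le> 1" by simp
      moreover have "card (V - N v) = card V - card (N v)"
        by (rule card_Diff_subset[OF finite_subset[OF NV finV] NV])
      moreover have "card V \<ge> 2" using xy finV card2[of V x y] by simp
      ultimately show False using \<open>card (N v) \<le> card V - 2\<close> by linarith
    qed
    then obtain u where u: "u \<in> V - N v" "u \<noteq> v" by blast
    have vS: "v \<in> V - N v" using v irr unfolding N_def by auto
    have cv: "component V E (N v) v = {v}"
      by (rule iso_component[OF vS]) (auto simp: N_def)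
    have "u \<in> component V E (N v) u" using u unfolding component_def conn_in_def by auto
    hence "component V E (N v) u \<noteq> component V E (N v) v" using cv u by auto
    moreover have "component V E (N v) u \<in> components V E (N v)"
      "component V E (N v) v \<in> components V E (N v)"
      using u vS unfolding components_def by auto
    ultimately have "card (components V E (N v)) \<ge> 2"
      using card2[OF fin_comp[OF sg]] by metis
    hence cN: "cutset V E (N v)" using NV unfolding cutset_def by auto
    let ?K = "{card S | S. cutset V E S}"
    have finK: "finite ?K"
    proof (rule finite_subset[of _ "{..card V}"])
      show "?K \<subseteq> {..card V}" using finV by (auto simp: cutset_def intro: card_mono)
    qed simp
    have lb: "min_degree V E \<le> k" if "k \<in> ?K" for k
    proof -
      obtain S where S: "cutset V E S" "k = card S" using \<open>k \<in> ?K\<close> by blast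
      have "V - S \<noteq> {}"
      proof
        assume "V - S = {}"
        hence "components V E S = {}" unfolding components_def by simp
        thus False using S unfolding cutset_def by simp
      qed
      then obtain z where z: "z \<in> V - S" by blast
      have "N z \<subseteq> S" using cut_noedge[OF sg fr S(1) z] unfolding N_def by auto
      moreover have "finite S" using S finV unfolding cutset_def by (auto intro: finite_subset)
      ultimately have "card (N z) \<le> card S" by (rule card_mono[rotated])
      thus ?thesis using mle[of z] z degN S by fastforce
    qed
    have "card (N v) \<in> ?K" using cN by blast
    hence ne: "?K \<noteq> {}" by blast
    have "Min ?K \<le> card (N v)" using finK \<open>card (N v) \<in> ?K\<close> by (rule Min_le)
    moreover have "min_degree V E \<le> Min ?K" using lb Min_in[OF finK ne] by blast
    ultimately have "Min ?K = min_degree V E" using vmin degN by simp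
    thus ?thesis using False unfolding connectivity_def by simp
  qed
  have P4: "min_degree V E \<ge> card V - independence_number V E"
  proof -
    let ?I = "V - N v"
    have ind: "independent V E ?I"
      unfolding independent_def
    proof (intro conjI ballI)
      fix a b assume a: "a \<in> ?I" and b: "b \<in> ?I"
      show "\<not> E a b"
      proof
        assume ab: "E a b"
        have "a \<noteq> v" using ab a b sym unfolding N_def by auto
        moreover have "b \<noteq> v" using ab a b sym unfolding N_def by auto
        moreover have "\<not> E a v" "\<not> E b v" using a b sym unfolding N_def by auto
        moreover have "a \<in> V" "b \<in> V" using a b by auto
        ultimately show False using fr v ab unfolding P2P1_free_def by metis
      qed
    qed auto
    let ?K = "{card I | I. independent V E I}"
    have finK: "finite ?K"
    proof (rule finite_subset[of _ "{..card V}"])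
      show "?K \<subseteq> {..card V}" using finV by (auto simp: independent_def intro: card_mono)
    qed simp
    have "card ?I \<le> independence_number V E"
      unfolding independence_number_def using finK ind by (auto intro: Max_ge)
    moreover have "card ?I = card V - card (N v)"
      by (rule card_Diff_subset[OF finite_subset[OF NV finV] NV])
    ultimately show ?thesis using vmin degN by simp
  qed
  show ?thesis using P1 P2 P3 P4 by blast
qed

end
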